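(* Let $V_1,V_2,V_3,Y,Z\in\mathbb{R}^3$ with $\|Y\|=\|Z\|$ and $Y,Z\in\operatorname{span}^+(V_1,V_2,V_3)$. Then at least one of the inequalities $\langle V_1,Y\rangle>\langle V_1,Z\rangle$, $\langle V_2,Y\rangle>\langle V_2,Z\rangle$, $\langle V_3,Y\rangle>\langle V_3,Z\rangle$ fails.
   Context: $\operatorname{span}^+(V_1,V_2,V_3)=\{\lambda_1V_1+\lambda_2V_2+\lambda_3V_3:\lambda_1,\lambda_2,\lambda_3>0\}$. *)

theory Defs
  imports "HOL-Analysis.Analysis"
begin

definition span_pos :: "real^3 \<Rightarrow> real^3 \<Rightarrow> real^3 \<Rightarrow> (real^3) set" where
  "span_pos V1 V2 V3 =
     {l1 *\<^sub>R V1 + l2 *\<^sub>R V2 + l3 *\<^sub>R V3 | l1 l2 l3. l1 > 0 \<and> l2 > 0 \<and> l3 > 0}"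

end

theory Submission
  imports Defs
begin

lemma pos_inner:
  fixes V1 V2 V3 Y D :: "real^3"
  assumes "Y \<in> span_pos V1 V2 V3"
    and "V1 \<bullet> D > 0" "V2 \<bullet> D > 0" "V3 \<bullet> D > 0"
  shows "Y \<bullet> D > 0"
proof -
  obtain l1 l2 l3 where Y: "Y = l1 *\<^sub>R V1 + l2 *\<^sub>R V2 + l3 *\<^sub>R V3"
    and l: "l1 > 0" "l2 > 0" "l3 > 0"
    using assms(1) unfolding span_pos_def by blast
  have "Y \<bullet> D = l1 * (V1 \<bullet> D) + l2 * (V2 \<bullet> D) + l3 * (V3 \<bullet> D)"
    unfolding Y by (simp add: inner_add_left)
  also have "\<dots> > 0" using l assms(2-4) by (intro add_pos_pos mult_pos_pos) auto
  finally show ?thesis .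
qed

theorem lemma5p3:
  fixes V1 V2 V3 Y Z :: "real^3"
  assumes "norm Y = norm Z"
    and "Y \<in> span_pos V1 V2 V3"
    and "Z \<in> span_pos V1 V2 V3"
  shows "\<not> (V1 \<bullet> Y > V1 \<bullet> Z \<and> V2 \<bullet> Y > V2 \<bullet> Z \<and> V3 \<bullet> Y > V3 \<bullet> Z)"
proof
  assume h: "V1 \<bullet> Y > V1 \<bullet> Z \<and> V2 \<bullet> Y > V2 \<bullet> Z \<and> V3 \<bullet> Y > V3 \<bullet> Z"
  have d: "V1 \<bullet> (Y - Z) > 0" "V2 \<bullet> (Y - Z) > 0" "V3 \<bullet> (Y - Z) > 0"
    using h by (auto simp: inner_diff_right)
  have a: "Y \<bullet> (Y - Z) > 0" using pos_inner[OF assms(2) d] .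
  have b: "Z \<bullet> (Y - Z) > 0" using pos_inner[OF assms(3) d] .
  have "Y \<bullet> Y = Z \<bullet> Z" using assms(1) by (metis power2_norm_eq_inner)
  with a b show False by (simp add: inner_diff_right inner_commute)
qed

end
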